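(* Let $\mathfrak{C}$ be a chromosome-set. A finite string $s$ is a multiplicity-extremal substring (MES) for $\mathfrak{C}$ if and only if there exist characters $c_1\neq c_2$ and $c_3\neq c_4$ such that $c_1s$, $c_2s$, $sc_3$ and $sc_4$ are all substrings of $\mathfrak{C}$.
   Context: All strings are over a fixed finite alphabet $\Sigma$. A cyclic string is a bi-infinite periodic word $\mathbb{Z}\to\Sigma$ up to shift, with least period $d$. A finite string is a substring of a cyclic string $c$ if it is a contiguous block of $c$; its number of occurrences in $c$ is the number of starting positions modulo $d$ at which it appears; a cyclic string is a substring only of itself. A chromosome-set is a (possibly infinite) set of cyclic strings; a string is a substring of it if it is a substring of one of its elements. A (finite or cyclic) string $s$ is a multiplicity-extremal substring (MES) for $\mathfrak{C}$ if $s$ is a substring of $\mathfrak{C}$ and every proper superstring $t$ of $s$ (a string $t\neq s$ containing $s$ as a substring) has, in at least one element of $\mathfrak{C}$, strictly fewer occurrences than $s$. *)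

theory Defs
  imports Main
begin

text \<open>A cyclic string is represented by a bi-infinite periodic word \<open>int \<Rightarrow> 'a\<close>;
  two representatives denote the same cyclic string iff they differ by a shift.\<close>

definition periodic :: "(int \<Rightarrow> 'a) \<Rightarrow> bool" where
  "periodic w \<longleftrightarrow> (\<exists>p::int. p > 0 \<and> (\<forall>i. w (i + p) = w i))"

definition period :: "(int \<Rightarrow> 'a) \<Rightarrow> nat" where
  "period w = (LEAST p::nat. p > 0 \<and> (\<forall>i. w (i + int p) = w i))"

definition shift_eq :: "(int \<Rightarrow> 'a) \<Rightarrow> (int \<Rightarrow> 'a) \<Rightarrow> bool" where
  "shift_eq w v \<longleftrightarrow> (\<exists>k::int. \<forall>i. v i = w (i + k))"

datatype 'a str = Fin "'a list" | Cyc "int \<Rightarrow> 'a"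

fun valid_str :: "'a str \<Rightarrow> bool" where
  "valid_str (Fin _) = True"
| "valid_str (Cyc w) = periodic w"

fun same_str :: "'a str \<Rightarrow> 'a str \<Rightarrow> bool" where
  "same_str (Fin x) (Fin y) = (x = y)"
| "same_str (Cyc w) (Cyc v) = shift_eq w v"
| "same_str _ _ = False"

definition occurs_at :: "'a list \<Rightarrow> (int \<Rightarrow> 'a) \<Rightarrow> int \<Rightarrow> bool" where
  "occurs_at s w j \<longleftrightarrow> (\<forall>k<length s. w (j + int k) = s ! k)"

fun substr :: "'a str \<Rightarrow> 'a str \<Rightarrow> bool" where
  "substr (Fin s) (Fin t) = (\<exists>u v. t = u @ s @ v)"
| "substr (Fin s) (Cyc c) = (\<exists>j. occurs_at s c j)"
| "substr (Cyc s) (Cyc c) = shift_eq s c"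
| "substr (Cyc _) (Fin _) = False"

fun occ :: "'a str \<Rightarrow> (int \<Rightarrow> 'a) \<Rightarrow> nat" where
  "occ (Fin s) c = card {j \<in> {0..<int (period c)}. occurs_at s c j}"
| "occ (Cyc t) c = (if shift_eq t c then 1 else 0)"

definition chromosome_set :: "(int \<Rightarrow> 'a) set \<Rightarrow> bool" where
  "chromosome_set C \<longleftrightarrow> (\<forall>c\<in>C. periodic c)"

definition substr_C :: "'a str \<Rightarrow> (int \<Rightarrow> 'a) set \<Rightarrow> bool" where
  "substr_C s C \<longleftrightarrow> (\<exists>c\<in>C. substr s (Cyc c))"

definition MES :: "(int \<Rightarrow> 'a) set \<Rightarrow> 'a str \<Rightarrow> bool" where
  "MES C s \<longleftrightarrow> substr_C s C \<and>
     (\<forall>t. valid_str t \<and> \<not> same_str t s \<and> substr s t \<longrightarrow> (\<exists>c\<in>C. occ t c < occ s c))"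

end

theory Submission imports Defs begin

lemma period_props:
  assumes "periodic c"
  shows "period c > 0" "\<And>i. c (i + int (period c)) = c i"
proof -
  from assms obtain p :: int where p: "p > 0" "\<forall>i. c (i + p) = c i" unfolding periodic_def by blast
  have ex: "\<exists>q::nat. q > 0 \<and> (\<forall>i. c (i + int q) = c i)"
    using p by (intro exI[of _ "nat p"]) auto
  have "period c > 0 \<and> (\<forall>i. c (i + int (period c)) = c i)"
    unfolding period_def by (rule LeastI_ex[OF ex])
  then show "period c > 0" "\<And>i. c (i + int (period c)) = c i" by auto
qed

lemma per_nat:
  fixes q :: int
  assumes "\<And>i. c (i + q) = c i"
  shows "c (i + int n * q) = c i"
proof (induction n arbitrary: i)
  case 0 then show ?case by simp
next
  case (Suc n)
  have "c (i + int (Suc n) * q) = c ((i + int n * q) + q)" by (simp add: algebra_simps)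
  also have "\<dots> = c (i + int n * q)" using assms[of "i + int n * q"] .
  finally show ?case using Suc by simp
qed

lemma per_int:
  fixes q m :: int
  assumes "\<And>i. c (i + q) = c i"
  shows "c (i + m * q) = c i"
proof (cases "m \<ge> 0")
  case True
  then show ?thesis using per_nat[where c=c and q=q, OF assms, of i "nat m"] by simp
next
  case False
  have "c (i + m * q) = c ((i + m * q) + int (nat (-m)) * q)"
    by (rule per_nat[where c=c and q=q, OF assms, symmetric])
  also have "\<dots> = c i" using False by (simp add: algebra_simps)
  finally show ?thesis .
qed

lemma periodic_mult:
  assumes "periodic c"
  shows "c (i + m * int (period c)) = c i"
  using per_int[of c "int (period c)" i m] period_props(2)[OF assms] by blast

lemma occurs_per:
  assumes "periodic c"
  shows "occurs_at s c (x + m * int (period c)) = occurs_at s c x"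
  unfolding occurs_at_def
proof -
  have "\<And>k. c (x + m * int (period c) + int k) = c (x + int k)"
    using periodic_mult[OF assms, of "x + int k" m for k] by (simp add: algebra_simps)
  then show "(\<forall>k<length s. c (x + m * int (period c) + int k) = s ! k) = (\<forall>k<length s. c (x + int k) = s ! k)"
    by simp
qed

lemma mod_rep: "(x::int) mod p = x + (- (x div p)) * p"
  by (simp add: minus_div_mult_eq_mod[symmetric])

lemma card_shift_le:
  fixes p d :: int
  assumes p: "p > 0" and PP: "\<And>x m. P (x + m*p) = P x" and QQ: "\<And>x m. Q (x + m*p) = Q x"
    and PQ: "\<And>j. P j \<Longrightarrow> Q (j+d)"
  shows "card {j\<in>{0..<p}. P j} \<le> card {j\<in>{0..<p}. Q j}"
    and "Q k \<Longrightarrow> \<not> P (k - d) \<Longrightarrow> card {j\<in>{0..<p}. P j} < card {j\<in>{0..<p}. Q j}"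
proof -
  let ?f = "\<lambda>j. (j + d) mod p"
  have inj: "inj_on ?f {j\<in>{0..<p}. P j}"
  proof (rule inj_onI)
    fix x y assume x: "x \<in> {j\<in>{0..<p}. P j}" and y: "y \<in> {j\<in>{0..<p}. P j}" and e: "?f x = ?f y"
    have "x mod p = ((x + d) mod p - d) mod p" by (simp add: mod_diff_left_eq)
    also have "\<dots> = ((y + d) mod p - d) mod p" using e by simp
    also have "\<dots> = y mod p" by (simp add: mod_diff_left_eq)
    finally have "x mod p = y mod p" .
    then show "x = y" using x y by simp
  qed
  have sub: "?f ` {j\<in>{0..<p}. P j} \<subseteq> {j\<in>{0..<p}. Q j}"
  proof
    fix z assume "z \<in> ?f ` {j\<in>{0..<p}. P j}"
    then obtain j where j: "P j" "z = (j+d) mod p" by auto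
    have "z = (j+d) + (-((j+d) div p))*p" using j(2) mod_rep[of "j+d" p] by simp
    then have "Q z = Q (j+d)" using QQ[of "j+d" "-((j+d) div p)"] by (simp only:)
    then have "Q z" using PQ[OF j(1)] by simp
    then show "z \<in> {j\<in>{0..<p}. Q j}" using j p by simp
  qed
  have fin: "finite {j\<in>{0..<p}. Q j}" by (rule finite_subset[of _ "{0..<p}"]) auto
  have cardeq: "card (?f ` {j\<in>{0..<p}. P j}) = card {j\<in>{0..<p}. P j}" by (rule card_image[OF inj])
  show "card {j\<in>{0..<p}. P j} \<le> card {j\<in>{0..<p}. Q j}"
    using card_mono[OF fin sub] cardeq by simp
  assume Qk: "Q k" and nP: "\<not> P (k - d)"
  have "Q (k + (-(k div p))*p) = Q k" by (rule QQ)
  then have "Q (k mod p)" using Qk mod_rep[of k p] by simp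
  then have km: "k mod p \<in> {j\<in>{0..<p}. Q j}" using p by simp
  have "k mod p \<notin> ?f ` {j\<in>{0..<p}. P j}"
  proof
    assume "k mod p \<in> ?f ` {j\<in>{0..<p}. P j}"
    then obtain j where j: "P j" "(j + d) mod p = k mod p" by auto
    then have "p dvd (k - (j + d))" using mod_eq_dvd_iff[of k p "j+d"] by simp
    then have "p dvd (k - d - j)" by (simp add: algebra_simps)
    then obtain m where "k - d - j = p * m" by (auto elim: dvdE)
    then have "k - d = j + m * p" by (simp add: algebra_simps)
    then have "P (k - d)" using PP j(1) by simp
    with nP show False by simp
  qed
  then have "?f ` {j\<in>{0..<p}. P j} \<subset> {j\<in>{0..<p}. Q j}" using sub km by blast
  then have "card (?f ` {j\<in>{0..<p}. P j}) < card {j\<in>{0..<p}. Q j}"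
    by (rule psubset_card_mono[OF fin])
  then show "card {j\<in>{0..<p}. P j} < card {j\<in>{0..<p}. Q j}" using cardeq by simp
qed


lemma card_shift_eq:
  fixes p d :: int
  assumes p: "p > 0" and PP: "\<And>x m. P (x + m*p) = P x" and QQ: "\<And>x m. Q (x + m*p) = Q x"
    and PQ: "\<And>j. P j \<Longrightarrow> Q (j+d)" and QP: "\<And>j. Q j \<Longrightarrow> P (j + - d)"
  shows "card {j\<in>{0..<p}. P j} = card {j\<in>{0..<p}. Q j}"
  using card_shift_le(1)[of p P Q d, OF p PP QQ PQ] card_shift_le(1)[of p Q P "-d", OF p QQ PP QP]
  by simp

lemma occurs_append: "occurs_at (u@s@v) c j \<Longrightarrow> occurs_at s c (j + int (length u))"
  unfolding occurs_at_def
proof (intro allI impI)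
  fix k assume H: "\<forall>k<length (u @ s @ v). c (j + int k) = (u @ s @ v) ! k" and k: "k < length s"
  have "c (j + int (length u + k)) = (u @ s @ v) ! (length u + k)" using H[rule_format, of "length u + k"] k by simp
  then show "c (j + int (length u) + int k) = s ! k" using k by (simp add: nth_append algebra_simps)
qed

lemma occurs_cons: "occurs_at (a#s) c j \<longleftrightarrow> c j = a \<and> occurs_at s c (j+1)"
  unfolding occurs_at_def
proof
  assume H: "\<forall>k<length (a # s). c (j + int k) = (a # s) ! k"
  have "c j = a" using H[rule_format, of 0] by simp
  moreover have "\<forall>k<length s. c (j + 1 + int k) = s ! k"
  proof (intro allI impI)
    fix k assume "k < length s"
    then show "c (j + 1 + int k) = s ! k" using H[rule_format, of "Suc k"] by (simp add: algebra_simps)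
  qed
  ultimately show "c j = a \<and> (\<forall>k<length s. c (j + 1 + int k) = s ! k)" by simp
next
  assume H: "c j = a \<and> (\<forall>k<length s. c (j + 1 + int k) = s ! k)"
  show "\<forall>k<length (a # s). c (j + int k) = (a # s) ! k"
  proof (intro allI impI)
    fix k assume k: "k < length (a # s)"
    show "c (j + int k) = (a # s) ! k"
    proof (cases k)
      case 0 then show ?thesis using H by simp
    next
      case (Suc k') then show ?thesis using H k by (simp add: algebra_simps)
    qed
  qed
qed

lemma occurs_snoc: "occurs_at (s@[a]) c j \<longleftrightarrow> occurs_at s c j \<and> c (j + int (length s)) = a"
  unfolding occurs_at_def
  by (auto simp: nth_append less_Suc_eq)

lemma occ_pos:
  assumes "periodic c" "occurs_at s c j"
  shows "occ (Fin s) c > 0"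
proof -
  let ?p = "int (period c)"
  have p: "?p > 0" using period_props(1)[OF assms(1)] by simp
  have "occurs_at s c (j mod ?p)" using occurs_per[OF assms(1), of s j "- (j div ?p)"] assms(2) mod_rep[of j ?p] by simp
  then have "j mod ?p \<in> {x\<in>{0..<?p}. occurs_at s c x}" using p by simp
  moreover have "finite {x\<in>{0..<?p}. occurs_at s c x}" by (rule finite_subset[of _ "{0..<?p}"]) auto
  ultimately show ?thesis by (simp only: occ.simps card_gt_0_iff) blast
qed

theorem theorem9:
  fixes C :: "(int \<Rightarrow> 'a::finite) set" and s :: "'a list"
  assumes "chromosome_set C"
  shows "MES C (Fin s) \<longleftrightarrow>
    (\<exists>c1 c2 c3 c4. c1 \<noteq> c2 \<and> c3 \<noteq> c4 \<and>
       substr_C (Fin (c1 # s)) C \<and> substr_C (Fin (c2 # s)) C \<and>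
       substr_C (Fin (s @ [c3])) C \<and> substr_C (Fin (s @ [c4])) C)"
proof
  have per: "\<And>c. c \<in> C \<Longrightarrow> periodic c" using assms unfolding chromosome_set_def by blast
  have pp: "\<And>c. c \<in> C \<Longrightarrow> int (period c) > 0" using period_props(1)[OF per] by simp
  assume M: "MES C (Fin s)"
  then obtain c0 j0 where c0: "c0 \<in> C" "occurs_at s c0 j0" unfolding MES_def substr_C_def by auto
  have L: "\<exists>c1 c2. c1 \<noteq> c2 \<and> substr_C (Fin (c1 # s)) C \<and> substr_C (Fin (c2 # s)) C"
  proof (rule ccontr)
    assume N: "\<not> ?thesis"
    define a where "a = c0 (j0 - 1)"
    have sa: "substr_C (Fin (a # s)) C" unfolding substr_C_def using c0
      by (auto simp: occurs_cons a_def intro!: bexI[of _ c0] exI[of _ "j0 - 1"])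
    have all: "\<And>c j. c \<in> C \<Longrightarrow> occurs_at s c j \<Longrightarrow> c (j - 1) = a"
    proof (rule ccontr)
      fix c j assume "c \<in> C" "occurs_at s c j" "c (j - 1) \<noteq> a"
      moreover have "substr_C (Fin (c (j - 1) # s)) C" unfolding substr_C_def using \<open>c \<in> C\<close> \<open>occurs_at s c j\<close>
        by (auto simp: occurs_cons intro!: bexI[of _ c] exI[of _ "j - 1"])
      ultimately show False using N sa by blast
    qed
    have MM: "\<And>t. valid_str t \<Longrightarrow> \<not> same_str t (Fin s) \<Longrightarrow> substr (Fin s) t \<Longrightarrow> \<exists>c\<in>C. occ t c < occ (Fin s) c"
      using M unfolding MES_def by blast
    have ss: "substr (Fin s) (Fin (a#s))" unfolding substr.simps by (rule exI[of _ "[a]"], rule exI[of _ "[]"]) simp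
    have "\<exists>c\<in>C. occ (Fin (a#s)) c < occ (Fin s) c" by (rule MM[OF _ _ ss]) simp_all
    then obtain c where c: "c \<in> C" "occ (Fin (a#s)) c < occ (Fin s) c" by blast
    have "occ (Fin (a#s)) c = occ (Fin s) c"
      unfolding occ.simps
    proof (rule card_shift_eq[where d = 1])
      show "0 < int (period c)" using pp[OF c(1)] .
      show "\<And>x m. occurs_at (a#s) c (x + m * int (period c)) = occurs_at (a#s) c x" by (rule occurs_per[OF per[OF c(1)]])
      show "\<And>x m. occurs_at s c (x + m * int (period c)) = occurs_at s c x" by (rule occurs_per[OF per[OF c(1)]])
      show "\<And>j. occurs_at (a#s) c j \<Longrightarrow> occurs_at s c (j + 1)" by (simp add: occurs_cons)
      show "\<And>j. occurs_at s c j \<Longrightarrow> occurs_at (a#s) c (j + - 1)" using all[OF c(1)] by (simp add: occurs_cons)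
    qed
    with c show False by simp
  qed
  have R: "\<exists>c1 c2. c1 \<noteq> c2 \<and> substr_C (Fin (s @ [c1])) C \<and> substr_C (Fin (s @ [c2])) C"
  proof (rule ccontr)
    assume N: "\<not> ?thesis"
    define a where "a = c0 (j0 + int (length s))"
    have sa: "substr_C (Fin (s @ [a])) C" unfolding substr_C_def using c0
      by (auto simp: occurs_snoc a_def intro!: bexI[of _ c0] exI[of _ "j0"])
    have all: "\<And>c j. c \<in> C \<Longrightarrow> occurs_at s c j \<Longrightarrow> c (j + int (length s)) = a"
    proof (rule ccontr)
      fix c j assume "c \<in> C" "occurs_at s c j" "c (j + int (length s)) \<noteq> a"
      moreover have "substr_C (Fin (s @ [c (j + int (length s))])) C" unfolding substr_C_def using \<open>c \<in> C\<close> \<open>occurs_at s c j\<close>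
        by (auto simp: occurs_snoc intro!: bexI[of _ c] exI[of _ "j"])
      ultimately show False using N sa by blast
    qed
    have MM: "\<And>t. valid_str t \<Longrightarrow> \<not> same_str t (Fin s) \<Longrightarrow> substr (Fin s) t \<Longrightarrow> \<exists>c\<in>C. occ t c < occ (Fin s) c"
      using M unfolding MES_def by blast
    have ss: "substr (Fin s) (Fin (s @ [a]))" unfolding substr.simps by (rule exI[of _ "[]"], rule exI[of _ "[a]"]) simp
    have "\<exists>c\<in>C. occ (Fin (s @ [a])) c < occ (Fin s) c" by (rule MM[OF _ _ ss]) simp_all
    then obtain c where c: "c \<in> C" "occ (Fin (s @ [a])) c < occ (Fin s) c" by blast
    have "occ (Fin (s @ [a])) c = occ (Fin s) c"
      unfolding occ.simps
    proof (rule card_shift_eq[where d = 0])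
      show "0 < int (period c)" using pp[OF c(1)] .
      show "\<And>x m. occurs_at (s @ [a]) c (x + m * int (period c)) = occurs_at (s @ [a]) c x" by (rule occurs_per[OF per[OF c(1)]])
      show "\<And>x m. occurs_at s c (x + m * int (period c)) = occurs_at s c x" by (rule occurs_per[OF per[OF c(1)]])
      show "\<And>j. occurs_at (s @ [a]) c j \<Longrightarrow> occurs_at s c (j + 0)" by (simp add: occurs_snoc)
      show "\<And>j. occurs_at s c j \<Longrightarrow> occurs_at (s @ [a]) c (j + - 0)" using all[OF c(1)] by (simp add: occurs_snoc)
    qed
    with c show False by simp
  qed
  from L R show "\<exists>c1 c2 c3 c4. c1 \<noteq> c2 \<and> c3 \<noteq> c4 \<and>
       substr_C (Fin (c1 # s)) C \<and> substr_C (Fin (c2 # s)) C \<and>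
       substr_C (Fin (s @ [c3])) C \<and> substr_C (Fin (s @ [c4])) C" by blast
next
  have per: "\<And>c. c \<in> C \<Longrightarrow> periodic c" using assms unfolding chromosome_set_def by blast
  have pp: "\<And>c. c \<in> C \<Longrightarrow> int (period c) > 0" using period_props(1)[OF per] by simp
  assume "\<exists>c1 c2 c3 c4. c1 \<noteq> c2 \<and> c3 \<noteq> c4 \<and>
       substr_C (Fin (c1 # s)) C \<and> substr_C (Fin (c2 # s)) C \<and>
       substr_C (Fin (s @ [c3])) C \<and> substr_C (Fin (s @ [c4])) C"
  then obtain c1 c2 c3 c4 where H: "c1 \<noteq> c2" "c3 \<noteq> c4"
       "substr_C (Fin (c1 # s)) C" "substr_C (Fin (c2 # s)) C"
       "substr_C (Fin (s @ [c3])) C" "substr_C (Fin (s @ [c4])) C" by blast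
  have left: "\<exists>c\<in>C. \<exists>j. occurs_at s c (j+1) \<and> c j \<noteq> a" for a
  proof -
    obtain ci where ci: "ci \<noteq> a" "substr_C (Fin (ci # s)) C" using H by metis
    then obtain c j where "c \<in> C" "occurs_at (ci # s) c j" unfolding substr_C_def by auto
    then show ?thesis using ci(1) occurs_cons by metis
  qed
  have right: "\<exists>c\<in>C. \<exists>j. occurs_at s c j \<and> c (j + int (length s)) \<noteq> a" for a
  proof -
    obtain ci where ci: "ci \<noteq> a" "substr_C (Fin (s @ [ci])) C" using H by metis
    then obtain c j where "c \<in> C" "occurs_at (s @ [ci]) c j" unfolding substr_C_def by auto
    then show ?thesis using ci(1) occurs_snoc by metis
  qed
  have sC: "substr_C (Fin s) C" using left[of undefined] unfolding substr_C_def by auto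
  show "MES C (Fin s)"
    unfolding MES_def
  proof (intro conjI sC allI impI)
    fix t assume T: "valid_str t \<and> \<not> same_str t (Fin s) \<and> substr (Fin s) t"
    show "\<exists>c\<in>C. occ t c < occ (Fin s) c"
    proof (cases t)
      case (Fin t')
      then obtain u v where uv: "t' = u @ s @ v" using T by auto
      have ne: "u \<noteq> [] \<or> v \<noteq> []" using T Fin uv by auto
      let ?d = "int (length u)"
      show ?thesis
      proof (cases "u \<noteq> []")
        case True
        obtain c j where cj: "c \<in> C" "occurs_at s c (j+1)" "c j \<noteq> last u" using left by blast
        have np: "\<not> occurs_at t' c (j + 1 - ?d)"
        proof
          assume "occurs_at t' c (j + 1 - ?d)"
          then have "\<forall>k<length t'. c (j + 1 - ?d + int k) = t' ! k" unfolding occurs_at_def .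
          then have "c (j + 1 - ?d + int (length u - 1)) = t' ! (length u - 1)"
          proof -
            have "length u - 1 < length t'" using True uv by (cases u) auto
            then show ?thesis using \<open>\<forall>k<length t'. c (j + 1 - ?d + int k) = t' ! k\<close> by blast
          qed
          moreover have "t' ! (length u - 1) = last u" using True uv by (simp add: nth_append last_conv_nth)
          moreover have "j + 1 - ?d + int (length u - 1) = j" using True by (cases u) auto
          ultimately show False using cj by simp
        qed
        have "occ (Fin t') c < occ (Fin s) c"
          unfolding occ.simps
        proof (rule card_shift_le(2)[where d = ?d and k = "j+1"])
          show "0 < int (period c)" using pp[OF cj(1)] .
          show "\<And>x m. occurs_at t' c (x + m * int (period c)) = occurs_at t' c x" by (rule occurs_per[OF per[OF cj(1)]])
          show "\<And>x m. occurs_at s c (x + m * int (period c)) = occurs_at s c x" by (rule occurs_per[OF per[OF cj(1)]])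
          show "\<And>j. occurs_at t' c j \<Longrightarrow> occurs_at s c (j + ?d)" using occurs_append[of u s v c] uv by blast
          show "occurs_at s c (j+1)" using cj(2) .
          show "\<not> occurs_at t' c (j + 1 - ?d)" using np .
        qed
        then show ?thesis using Fin cj by blast
      next
        case False
        then have v: "v \<noteq> []" using ne by simp
        obtain c j where cj: "c \<in> C" "occurs_at s c j" "c (j + int (length s)) \<noteq> hd v" using right by blast
        have np: "\<not> occurs_at t' c (j - ?d)"
        proof
          assume "occurs_at t' c (j - ?d)"
          then have A: "\<forall>k<length t'. c (j - ?d + int k) = t' ! k" unfolding occurs_at_def .
          have "length u + length s < length t'" using v uv by simp
          then have "c (j - ?d + int (length u + length s)) = t' ! (length u + length s)"
            using A by blast
          moreover have "t' ! (length u + length s) = hd v" using v uv by (simp add: nth_append hd_conv_nth)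
          ultimately show False using cj by (simp add: algebra_simps)
        qed
        have "occ (Fin t') c < occ (Fin s) c"
          unfolding occ.simps
        proof (rule card_shift_le(2)[where d = ?d and k = "j"])
          show "0 < int (period c)" using pp[OF cj(1)] .
          show "\<And>x m. occurs_at t' c (x + m * int (period c)) = occurs_at t' c x" by (rule occurs_per[OF per[OF cj(1)]])
          show "\<And>x m. occurs_at s c (x + m * int (period c)) = occurs_at s c x" by (rule occurs_per[OF per[OF cj(1)]])
          show "\<And>j. occurs_at t' c j \<Longrightarrow> occurs_at s c (j + ?d)" using occurs_append[of u s v c] uv by blast
          show "occurs_at s c j" using cj(2) .
          show "\<not> occurs_at t' c (j - ?d)" using np .
        qed
        then show ?thesis using Fin cj by blast
      qed
    next
      case (Cyc w)
      obtain c j1 where c: "c \<in> C" "occurs_at s c (j1+1)" "c j1 = c1"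
        using H(3) unfolding substr_C_def by (auto simp: occurs_cons)
      obtain c' j2 where c': "c' \<in> C" "occurs_at s c' (j2+1)" "c' j2 = c2"
        using H(4) unfolding substr_C_def by (auto simp: occurs_cons)
      show ?thesis
      proof (cases "shift_eq w c \<and> shift_eq w c'")
        case False
        then show ?thesis using Cyc occ_pos[OF per[OF c(1)] c(2)] occ_pos[OF per[OF c'(1)] c'(2)] c(1) c'(1)
          by auto
      next
        case True
        then obtain k k' where k: "\<And>i. c i = w (i + k)" and k': "\<And>i. c' i = w (i + k')"
          unfolding shift_eq_def by blast
        have cc': "\<And>i. c' i = c (i + k' - k)" using k k' by (simp add: algebra_simps)
        define j2' where "j2' = j2 + k' - k"
        have o2: "occurs_at s c (j2' + 1)" "c j2' = c2"
          using c' cc' unfolding j2'_def occurs_at_def by (simp_all add: algebra_simps)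
        let ?p = "int (period c)"
        have p: "?p > 0" using pp[OF c(1)] .
        define x1 where "x1 = (j1 + 1) mod ?p"
        define x2 where "x2 = (j2' + 1) mod ?p"
        have ox1: "occurs_at s c x1" unfolding x1_def
          using occurs_per[OF per[OF c(1)], of s "j1+1" "- ((j1+1) div ?p)"] c(2) mod_rep[of "j1+1" ?p] by simp
        have ox2: "occurs_at s c x2" unfolding x2_def
          using occurs_per[OF per[OF c(1)], of s "j2'+1" "- ((j2'+1) div ?p)"] o2(1) mod_rep[of "j2'+1" ?p] by simp
        have cx1: "c (x1 - 1) = c1"
        proof -
          have "x1 - 1 = j1 + (- ((j1+1) div ?p)) * ?p" unfolding x1_def using mod_rep[of "j1+1" ?p] by simp
          then show ?thesis using periodic_mult[OF per[OF c(1)], of j1 "- ((j1+1) div ?p)"] c(3) by simp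
        qed
        have cx2: "c (x2 - 1) = c2"
        proof -
          have "x2 - 1 = j2' + (- ((j2'+1) div ?p)) * ?p" unfolding x2_def using mod_rep[of "j2'+1" ?p] by simp
          then show ?thesis using periodic_mult[OF per[OF c(1)], of j2' "- ((j2'+1) div ?p)"] o2(2) by simp
        qed
        have ne: "x1 \<noteq> x2" using cx1 cx2 H(1) by auto
        have sub: "{x1, x2} \<subseteq> {x\<in>{0..<?p}. occurs_at s c x}" using ox1 ox2 p unfolding x1_def x2_def by auto
        have "card {x1, x2} \<le> card {x\<in>{0..<?p}. occurs_at s c x}" by (rule card_mono[OF finite_subset[of _ "{0..<?p}"] sub]) auto
        then have "occ (Fin s) c \<ge> 2" using ne by simp
        then have "occ (Cyc w) c < occ (Fin s) c" by simp
        then show ?thesis using Cyc c(1) by blast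
      qed
    qed
  qed
qed

end
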